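(* Let $\mathcal{R}$ be a set of rules on a finite set $Q$, and let $\mathcal{R}^*$ be the set of critical rules of $\mathcal{A}(\mathcal{R})$. Then $\mathcal{A}(\mathcal{R}^* )=\mathcal{A}(\mathcal{R})$, $|\mathcal{R}^*|\le|\mathcal{R}|$, and $l(\mathcal{R}^* )\le l(\mathcal{R})$.
   Context: A rule on $Q$ is a pair $(A,q)$ with $A\subseteq Q$, $q\in Q$; it accepts $Y\subseteq Q$ if $q\in Y$ implies $Y\cap A\neq\emptyset$. $\mathcal{K}(\mathcal{R})$ is the family of subsets accepted by all rules of $\mathcal{R}$, and $\mathcal{A}(\mathcal{R})$ is the family of $K\in\mathcal{K}(\mathcal{R})$ for which there is a sequence $\emptyset=Y_0\subseteq\dots\subseteq Y_k=K$ of members of $\mathcal{K}(\mathcal{R})$ with $|Y_{i+1}\setminus Y_i|=1$; it is an antimatroid. For an antimatroid $\mathcal{A}$, let $\mathcal{A}^*=\{Q\setminus X: X\in\mathcal{A}\}$ and $\tau(X)=\bigcap\{Y\in\mathcal{A}^*: X\subseteq Y\}$. A rule $(A,q)$ with $q\notin A$ is critical for $\mathcal{A}$ if, with $C=A\cup\{q\}$, $\tau(C)\setminus\{q\}\notin\mathcal{A}^*$ and $\tau(C)\setminus\{q,s\}\in\mathcal{A}^*$ for every $s\in A$. The size of a set of rules is $l(\mathcal{R})=\sum_{(A,q)\in\mathcal{R}}(|A|+1)$. *)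

theory Defs
  imports Main
begin

type_synonym 'a rule = "'a set \<times> 'a"

definition is_rule_on :: "'a set \<Rightarrow> 'a rule \<Rightarrow> bool" where
  "is_rule_on Q r \<longleftrightarrow> fst r \<subseteq> Q \<and> snd r \<in> Q"

definition accepts :: "'a rule \<Rightarrow> 'a set \<Rightarrow> bool" where
  "accepts r Y \<longleftrightarrow> (snd r \<in> Y \<longrightarrow> Y \<inter> fst r \<noteq> {})"

definition KR :: "'a set \<Rightarrow> 'a rule set \<Rightarrow> 'a set set" where
  "KR Q R = {Y. Y \<subseteq> Q \<and> (\<forall>r\<in>R. accepts r Y)}"

definition AR :: "'a set \<Rightarrow> 'a rule set \<Rightarrow> 'a set set" where
  "AR Q R = {K \<in> KR Q R. \<exists>(k::nat) Ys. Ys 0 = {} \<and> Ys k = K \<and>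
      (\<forall>i\<le>k. Ys i \<in> KR Q R) \<and>
      (\<forall>i<k. Ys i \<subseteq> Ys (Suc i) \<and> card (Ys (Suc i) - Ys i) = 1)}"

definition dual :: "'a set \<Rightarrow> 'a set set \<Rightarrow> 'a set set" where
  "dual Q \<A> = {Q - X | X. X \<in> \<A>}"

definition tau :: "'a set \<Rightarrow> 'a set set \<Rightarrow> 'a set \<Rightarrow> 'a set" where
  "tau Q \<A> X = \<Inter>{Y \<in> dual Q \<A>. X \<subseteq> Y}"

definition critical :: "'a set \<Rightarrow> 'a set set \<Rightarrow> 'a rule \<Rightarrow> bool" where
  "critical Q \<A> r \<longleftrightarrow> (let A = fst r; q = snd r; C = insert q A in
     q \<notin> A \<and> tau Q \<A> C - {q} \<notin> dual Q \<A> \<and>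
     (\<forall>s\<in>A. tau Q \<A> C - {q, s} \<in> dual Q \<A>))"

definition critical_rules :: "'a set \<Rightarrow> 'a set set \<Rightarrow> 'a rule set" where
  "critical_rules Q \<A> = {r. is_rule_on Q r \<and> critical Q \<A> r}"

definition rules_size :: "'a rule set \<Rightarrow> nat" where
  "rules_size R = (\<Sum>r\<in>R. card (fst r) + 1)"

end

theory Submission
  imports Defs
begin

inductive_set acc :: "'a set \<Rightarrow> 'a rule set \<Rightarrow> 'a set set" for Q R where
  acc_empty: "{} \<in> acc Q R"
| acc_insert: "Y \<in> acc Q R \<Longrightarrow> x \<notin> Y \<Longrightarrow> insert x Y \<in> KR Q R \<Longrightarrow> insert x Y \<in> acc Q R"

lemma KR_empty: "{} \<in> KR Q R" by (auto simp: KR_def accepts_def)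

lemma acc_KR: "Y \<in> acc Q R \<Longrightarrow> Y \<in> KR Q R"
  by (induction rule: acc.induct) (auto simp: KR_empty)

lemma acc_sub: "Y \<in> acc Q R \<Longrightarrow> Y \<subseteq> Q"
  by (drule acc_KR) (simp add: KR_def)

lemma KR_Un: "A \<in> KR Q R \<Longrightarrow> B \<in> KR Q R \<Longrightarrow> A \<union> B \<in> KR Q R"
  unfolding KR_def accepts_def by blast

lemma acc_Un: assumes "Y2 \<in> acc Q R" "Y1 \<in> acc Q R" shows "Y1 \<union> Y2 \<in> acc Q R"
  using assms(1)
proof induction
  case acc_empty thus ?case using assms(2) by simp
next
  case (acc_insert Y x)
  show ?case
  proof (cases "x \<in> Y1 \<union> Y")
    case True
    hence "Y1 \<union> insert x Y = Y1 \<union> Y" by auto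
    thus ?thesis using acc_insert by simp
  next
    case False
    have e: "Y1 \<union> insert x Y = insert x (Y1 \<union> Y)" by auto
    have "Y1 \<union> insert x Y \<in> KR Q R"
      using KR_Un[OF acc_KR[OF assms(2)] acc_insert.hyps(3)] .
    hence "insert x (Y1 \<union> Y) \<in> KR Q R" using e by simp
    thus ?thesis using acc.acc_insert[OF acc_insert.IH] False e by auto
  qed
qed

lemma acc_aug: assumes "Y2 \<in> acc Q R" "Y1 \<in> acc Q R" "\<not> Y2 \<subseteq> Y1"
  shows "\<exists>x\<in>Y2 - Y1. insert x Y1 \<in> acc Q R"
  using assms(1,3)
proof induction
  case acc_empty thus ?case by simp
next
  case (acc_insert Y x)
  show ?case
  proof (cases "Y \<subseteq> Y1")
    case True
    with acc_insert.prems have "x \<notin> Y1" by auto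
    have "insert x Y1 = Y1 \<union> insert x Y" using True by auto
    hence "insert x Y1 \<in> acc Q R"
      using acc_Un[OF acc.acc_insert[OF acc_insert.hyps] assms(2)] by simp
    thus ?thesis using \<open>x \<notin> Y1\<close> by auto
  next
    case False
    with acc_insert.IH show ?thesis by auto
  qed
qed

lemma AR_acc: "AR Q R = acc Q R"
proof
  show "AR Q R \<subseteq> acc Q R"
  proof
    fix K assume "K \<in> AR Q R"
    then obtain k Ys where h: "Ys 0 = {}" "Ys k = K" "\<forall>i\<le>k. Ys i \<in> KR Q R"
      "\<forall>i<k. Ys i \<subseteq> Ys (Suc i) \<and> card (Ys (Suc i) - Ys i) = 1"
      unfolding AR_def by blast
    have "i \<le> k \<Longrightarrow> Ys i \<in> acc Q R" for i
    proof (induction i)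
      case 0 thus ?case using h(1) acc_empty by simp
    next
      case (Suc i)
      hence a: "Ys i \<in> acc Q R" by simp
      from Suc.prems h(4) have s: "Ys i \<subseteq> Ys (Suc i)" "card (Ys (Suc i) - Ys i) = 1" by auto
      then obtain x where x: "Ys (Suc i) - Ys i = {x}" by (auto simp: card_1_singleton_iff)
      hence "Ys (Suc i) = insert x (Ys i)" "x \<notin> Ys i" using s by auto
      thus ?case using acc_insert[OF a] h(3) Suc.prems by metis
    qed
    thus "K \<in> acc Q R" using h(2) by auto
  qed
next
  show "acc Q R \<subseteq> AR Q R"
  proof
    fix K assume "K \<in> acc Q R"
    thus "K \<in> AR Q R"
    proof induction
      case acc_empty
      show ?case unfolding AR_def using KR_empty
        by (auto intro!: exI[of _ 0] exI[of _ "\<lambda>_. {}"])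
    next
      case (acc_insert Y x)
      from acc_insert.IH obtain k Ys where h: "Ys 0 = {}" "Ys k = Y" "\<forall>i\<le>k. Ys i \<in> KR Q R"
        "\<forall>i<k. Ys i \<subseteq> Ys (Suc i) \<and> card (Ys (Suc i) - Ys i) = 1"
        unfolding AR_def by blast
      define Ys' where "Ys' = Ys(Suc k := insert x Y)"
      have 1: "Ys' 0 = {}" "Ys' (Suc k) = insert x Y" using h by (auto simp: Ys'_def)
      have 2: "\<forall>i\<le>Suc k. Ys' i \<in> KR Q R" using h acc_insert.hyps(3)
        by (auto simp: Ys'_def le_Suc_eq)
      have 3: "\<forall>i<Suc k. Ys' i \<subseteq> Ys' (Suc i) \<and> card (Ys' (Suc i) - Ys' i) = 1"
      proof (intro allI impI)
        fix i assume i: "i < Suc k"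
        show "Ys' i \<subseteq> Ys' (Suc i) \<and> card (Ys' (Suc i) - Ys' i) = 1"
        proof (cases "i = k")
          case True
          have "insert x Y - Y = {x}" using acc_insert.hyps(2) by auto
          then show ?thesis using True h by (auto simp: Ys'_def)
        next
          case False
          then show ?thesis using i h by (auto simp: Ys'_def)
        qed
      qed
      show ?case using 1 2 3 acc_insert.hyps(3) unfolding AR_def by blast
    qed
  qed
qed

lemma Inter_closed:
  "finite F \<Longrightarrow> F \<noteq> {} \<Longrightarrow> F \<subseteq> C \<Longrightarrow> (\<And>a b. a\<in>C \<Longrightarrow> b\<in>C \<Longrightarrow> a \<inter> b \<in> C) \<Longrightarrow> \<Inter>F \<in> C"
  by (induction F rule: finite_ne_induct) auto

locale ctx =
  fixes Q :: "'a set" and R :: "'a rule set"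
  assumes finQ: "finite Q" and rules: "\<forall>r\<in>R. is_rule_on Q r"
begin

abbreviation "AA \<equiv> acc Q R"
abbreviation "CC \<equiv> dual Q AA"
abbreviation "T \<equiv> tau Q AA"
abbreviation "crit \<equiv> critical_rules Q AA"

lemma dual_iff: "S \<subseteq> Q \<Longrightarrow> S \<in> CC \<longleftrightarrow> Q - S \<in> AA"
proof
  assume "S \<subseteq> Q" "S \<in> CC"
  then obtain X where "S = Q - X" "X \<in> AA" unfolding dual_def by blast
  moreover have "X \<subseteq> Q" using acc_sub[OF \<open>X \<in> AA\<close>] .
  ultimately show "Q - S \<in> AA" by (metis Diff_Diff_Int inf.absorb_iff2)
next
  assume "S \<subseteq> Q" "Q - S \<in> AA"
  moreover have "S = Q - (Q - S)" using \<open>S \<subseteq> Q\<close> by auto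
  ultimately show "S \<in> CC" unfolding dual_def by blast
qed

lemma dual_sub: "D \<in> CC \<Longrightarrow> D \<subseteq> Q"
  unfolding dual_def by blast

lemma dual_Int: assumes "D1 \<in> CC" "D2 \<in> CC" shows "D1 \<inter> D2 \<in> CC"
proof -
  obtain Y1 Y2 where "D1 = Q - Y1" "D2 = Q - Y2" "Y1 \<in> AA" "Y2 \<in> AA"
    using assms unfolding dual_def by blast
  moreover have "D1 \<inter> D2 = Q - (Y1 \<union> Y2)" using calculation by auto
  moreover have "Y1 \<union> Y2 \<in> AA" using acc_Un[of Y2 Q R Y1] calculation by simp
  ultimately show ?thesis unfolding dual_def by blast
qed

lemma dual_Q: "Q \<in> CC"
proof -
  have "Q = Q - {}" by simp
  thus ?thesis unfolding dual_def using acc_empty[of Q R] by blast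
qed

lemma dual_aug: assumes "E \<in> CC" "D \<in> CC" "E \<subseteq> D" "E \<noteq> D"
  shows "\<exists>x\<in>D - E. D - {x} \<in> CC"
proof -
  obtain Y1 Y2 where y: "E = Q - Y1" "D = Q - Y2" "Y1 \<in> AA" "Y2 \<in> AA"
    using assms unfolding dual_def by blast
  have q: "Y1 \<subseteq> Q" "Y2 \<subseteq> Q" using y acc_sub by auto
  have "\<not> Y1 \<subseteq> Y2" using assms(3,4) y q by auto
  then obtain x where x: "x \<in> Y1 - Y2" "insert x Y2 \<in> AA" using acc_aug[OF y(3) y(4)] by blast
  have "D - {x} = Q - insert x Y2" using y by auto
  hence "D - {x} \<in> CC" using x unfolding dual_def by blast
  moreover have "x \<in> D - E" using x y q by auto
  ultimately show ?thesis by blast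
qed

lemma tau_props: assumes "X \<subseteq> Q"
  shows "T X \<in> CC" "X \<subseteq> T X" "\<And>Z. Z \<in> CC \<Longrightarrow> X \<subseteq> Z \<Longrightarrow> T X \<subseteq> Z"
proof -
  let ?F = "{Y \<in> CC. X \<subseteq> Y}"
  have "?F \<subseteq> Pow Q" using dual_sub by auto
  hence f: "finite ?F" using finQ finite_subset by blast
  have "Q \<in> ?F" using dual_Q assms by auto
  hence ne: "?F \<noteq> {}" by blast
  show "T X \<in> CC" unfolding tau_def
    by (rule Inter_closed[OF f ne]) (auto intro: dual_Int)
  show "X \<subseteq> T X" unfolding tau_def by auto
  show "\<And>Z. Z \<in> CC \<Longrightarrow> X \<subseteq> Z \<Longrightarrow> T X \<subseteq> Z" unfolding tau_def by auto
qed

lemma critical_iff: "critical Q AA (A,q) \<longleftrightarrow> q \<notin> A \<and> T (insert q A) - {q} \<notin> CC \<and>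
   (\<forall>s\<in>A. T (insert q A) - {q,s} \<in> CC)"
  by (simp add: critical_def Let_def)

lemma crit_iff: "(A,q) \<in> crit \<longleftrightarrow> A \<subseteq> Q \<and> q \<in> Q \<and> q \<notin> A \<and> T (insert q A) - {q} \<notin> CC \<and>
   (\<forall>s\<in>A. T (insert q A) - {q,s} \<in> CC)"
  unfolding critical_rules_def is_rule_on_def using critical_iff by auto

lemma valid: assumes "A \<subseteq> Q" "q \<notin> A" "q \<in> Q" "T (insert q A) - {q} \<notin> CC" "Z \<in> CC" "A \<subseteq> Z"
  shows "q \<in> Z"
proof (rule ccontr)
  assume nq: "q \<notin> Z"
  let ?T = "T (insert q A)"
  have iq: "insert q A \<subseteq> Q" using assms by auto
  have T1: "?T \<in> CC" "insert q A \<subseteq> ?T" using tau_props[OF iq] by auto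
  have W: "Z \<inter> ?T \<in> CC" by (rule dual_Int[OF assms(5) T1(1)])
  have "Z \<inter> ?T \<subseteq> ?T" "Z \<inter> ?T \<noteq> ?T" using nq T1 by auto
  then obtain x where x: "x \<in> ?T - Z \<inter> ?T" "?T - {x} \<in> CC"
    using dual_aug[OF W T1(1)] by blast
  have "x \<noteq> q" using x assms(4) by auto
  moreover have "x \<notin> A" using x assms(6) T1 by auto
  ultimately have "insert q A \<subseteq> ?T - {x}" using T1 by auto
  hence "?T \<subseteq> ?T - {x}" using tau_props(3)[OF iq x(2)] by simp
  thus False using x by auto
qed

lemma KR_crit: assumes "Y \<in> AA" shows "Y \<in> KR Q crit"
  unfolding KR_def
proof (intro CollectI conjI ballI)
  show "Y \<subseteq> Q" using acc_sub[OF assms] .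
  fix r assume r: "r \<in> crit"
  obtain A q where rr: "r = (A,q)" by fastforce
  have c: "A \<subseteq> Q" "q \<in> Q" "q \<notin> A" "T (insert q A) - {q} \<notin> CC" using r rr crit_iff[of A q] by auto
  show "accepts r Y" unfolding accepts_def rr fst_conv snd_conv
  proof
    assume qY: "q \<in> Y"
    show "Y \<inter> A \<noteq> {}"
    proof
      assume d: "Y \<inter> A = {}"
      have "Q - (Q - Y) = Y" using \<open>Y \<subseteq> Q\<close> by auto
      hence "Q - Y \<in> CC" using dual_iff[of "Q - Y"] assms by auto
      moreover have "A \<subseteq> Q - Y" using d c by auto
      ultimately have "q \<in> Q - Y" using valid c by blast
      thus False using qY by auto
    qed
  qed
qed

lemma acc_to_crit: "Y \<in> AA \<Longrightarrow> Y \<in> acc Q crit"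
proof (induction rule: acc.induct)
  case acc_empty thus ?case by (rule acc.acc_empty)
next
  case (acc_insert Y x)
  have "insert x Y \<in> AA" using acc.acc_insert[OF acc_insert.hyps] .
  thus ?case using acc.acc_insert[OF acc_insert.IH acc_insert.hyps(2)] KR_crit by blast
qed

lemma crit_to_acc: "Y \<in> acc Q crit \<Longrightarrow> Y \<in> AA"
proof (induction rule: acc.induct)
  case acc_empty thus ?case by (rule acc.acc_empty)
next
  case (acc_insert Y x)
  have KRc: "insert x Y \<in> KR Q crit" by fact
  have YA: "Y \<in> AA" by fact
  have xY: "x \<notin> Y" by fact
  show "insert x Y \<in> AA"
  proof (rule ccontr)
    assume nY: "insert x Y \<notin> AA"
    have xQ: "x \<in> Q" and YQ: "Y \<subseteq> Q" using KRc by (auto simp: KR_def)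
    let ?Z0 = "Q - Y"
    have "Q - (Q - Y) = Y" using YQ by auto
    hence Z0: "?Z0 \<in> CC" using dual_iff[of ?Z0] YA by auto
    define F where "F = {D \<in> CC. x \<in> D \<and> D \<subseteq> ?Z0 \<and> D - {x} \<notin> CC}"
    have "Q - (?Z0 - {x}) = insert x Y" using YQ xQ by auto
    hence "?Z0 - {x} \<notin> CC" using dual_iff[of "?Z0 - {x}"] nY by auto
    hence "?Z0 \<in> F" using Z0 xQ xY unfolding F_def by auto
    then obtain D where D: "D \<in> F" and Dmin: "\<forall>D'. D' \<in> F \<longrightarrow> card D \<le> card D'"
      using ex_has_least_nat[of "\<lambda>D. D \<in> F" ?Z0 card] by blast
    have DC: "D \<in> CC" "x \<in> D" "D \<subseteq> ?Z0" "D - {x} \<notin> CC" using D unfolding F_def by auto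
    have DQ: "D \<subseteq> Q" using DC by auto
    define A where "A = {s \<in> D - {x}. D - {x, s} \<in> CC}"
    have iA: "insert x A \<subseteq> D" using DC by (auto simp: A_def)
    have iAQ: "insert x A \<subseteq> Q" using iA DQ by auto
    have TD: "T (insert x A) = D"
    proof (rule ccontr)
      let ?E = "T (insert x A)"
      assume ne: "?E \<noteq> D"
      have E: "?E \<in> CC" "insert x A \<subseteq> ?E" "?E \<subseteq> D"
        using tau_props[OF iAQ] DC(1) iA by auto
      obtain y where y: "y \<in> D - ?E" "D - {y} \<in> CC" using dual_aug[OF E(1) DC(1) E(3) ne] by blast
      have xE: "x \<in> ?E" using E(2) by (rule subsetD) (rule insertI1)
      have yE: "y \<notin> ?E"
      proof
        assume "y \<in> ?E"
        with y(1) show False by (rule DiffD2)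
      qed
      have yx: "y \<noteq> x" using xE yE by metis
      have yD: "y \<in> D" using y(1) by (rule DiffD1)
      have fD: "finite D" by (rule finite_subset[OF DQ finQ])
      have "card (D - {y}) < card D" by (rule card_Diff1_less[OF fD yD])
      have nF: "D - {y} \<notin> F"
      proof
        assume a: "D - {y} \<in> F"
        have "D - {y} \<in> F \<longrightarrow> card D \<le> card (D - {y})" using Dmin by (rule spec)
        hence "card D \<le> card (D - {y})" using a by (rule mp)
        thus False using \<open>card (D - {y}) < card D\<close> by simp
      qed
      have "D - {y} \<in> CC \<and> x \<in> D - {y} \<and> D - {y} \<subseteq> ?Z0" using y yx DC by blast
      moreover have "\<not> (D - {y} \<in> CC \<and> x \<in> D - {y} \<and> D - {y} \<subseteq> ?Z0 \<and> D - {y} - {x} \<notin> CC)"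
        using nF unfolding F_def by simp
      ultimately have m: "D - {y} - {x} \<in> CC" by blast
      have eq: "D - {x, y} = D - {y} - {x}" by blast
      have "D - {x, y} \<in> CC" unfolding eq by (rule m)
      moreover have "y \<in> D - {x}" using y yx by blast
      ultimately have "y \<in> A" unfolding A_def by simp
      hence "y \<in> insert x A" by (rule insertI2)
      hence "y \<in> ?E" using E(2) by (rule subsetD[rotated])
      thus False using yE by (rule notE[rotated])
    qed
    have c1: "A \<subseteq> Q" "x \<in> Q" using iAQ by auto
    have c2: "x \<notin> A" unfolding A_def by blast
    have c3: "\<forall>s\<in>A. D - {x,s} \<in> CC" unfolding A_def by blast
    have "(A, x) \<in> crit" unfolding crit_iff[of A x] TD
      using c1 c2 c3 DC(4) by blast
    hence "accepts (A,x) (insert x Y)" using KRc unfolding KR_def by blast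
    hence "insert x Y \<inter> A \<noteq> {}" unfolding accepts_def by simp
    moreover have "A \<subseteq> D - {x}" by (auto simp: A_def)
    ultimately show False using DC by auto
  qed
qed

lemma exB: assumes "(A,q) \<in> crit" shows "\<exists>B. (B,q) \<in> R \<and> A \<subseteq> B \<and> B \<subseteq> T (insert q A) - {q}"
proof -
  have c: "A \<subseteq> Q" "q \<in> Q" "q \<notin> A" "T (insert q A) - {q} \<notin> CC"
    "\<forall>s\<in>A. T (insert q A) - {q,s} \<in> CC" using assms crit_iff[of A q] by auto
  let ?T = "T (insert q A)"
  let ?X = "?T - {q}"
  define Y where "Y = Q - ?X"
  define Y0 where "Y0 = Q - ?T"
  have iq: "insert q A \<subseteq> Q" using c by auto
  have TC: "?T \<in> CC" "insert q A \<subseteq> ?T" "?T \<subseteq> Q" using tau_props[OF iq] dual_sub by auto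
  have Y0A: "Y0 \<in> AA" using dual_iff[OF TC(3)] TC(1) Y0_def by auto
  have Yeq: "Y = insert q Y0" using TC c unfolding Y_def Y0_def by auto
  have qY0: "q \<notin> Y0" using TC unfolding Y0_def by auto
  have "?X \<subseteq> Q" using TC by auto
  hence "Y \<notin> AA" using dual_iff[of ?X] c(4) Y_def by auto
  hence nK: "Y \<notin> KR Q R" using acc_insert[OF Y0A qY0] Yeq by auto
  have "Y \<subseteq> Q" unfolding Y_def by auto
  then obtain r where r: "r \<in> R" "\<not> accepts r Y" using nK unfolding KR_def by blast
  obtain B q' where rr: "r = (B,q')" by fastforce
  have bq: "(B,q') \<in> R" "q' \<in> Y" "Y \<inter> B = {}" using r rr unfolding accepts_def by auto
  have BQ: "B \<subseteq> Q" using rules bq(1) unfolding is_rule_on_def by fastforce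
  have "Y0 \<in> KR Q R" using acc_KR[OF Y0A] .
  hence "accepts (B,q') Y0" using bq(1) unfolding KR_def by blast
  hence "q' \<notin> Y0" using bq Yeq unfolding accepts_def by auto
  hence qq: "q' = q" using bq Yeq by auto
  have AB: "A \<subseteq> B"
  proof
    fix s assume s: "s \<in> A"
    have "?T - {q,s} \<in> CC" using c s by auto
    moreover have "?T - {q,s} = ?X - {s}" by auto
    moreover have "Q - (?X - {s}) = insert s Y" using TC s c unfolding Y_def by auto
    moreover have "?X - {s} \<subseteq> Q" using TC by auto
    ultimately have "insert s Y \<in> AA" using dual_iff[of "?X - {s}"] by auto
    hence "accepts (B,q) (insert s Y)" using acc_KR bq(1) qq unfolding KR_def by blast
    thus "s \<in> B" using bq qq unfolding accepts_def by auto
  qed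
  have "B \<subseteq> ?X" using BQ bq(3) unfolding Y_def by auto
  thus ?thesis using AB bq(1) qq by blast
qed

lemma sub_aux: assumes "(A1,q) \<in> crit" "(A2,q) \<in> crit" "T (insert q A1) = T (insert q A2)"
  "A2 \<subseteq> T (insert q A1) - {q}" shows "A1 \<subseteq> A2"
proof
  fix s assume s: "s \<in> A1"
  show "s \<in> A2"
  proof (rule ccontr)
    assume ns: "s \<notin> A2"
    have c1: "T (insert q A1) - {q,s} \<in> CC" using assms(1) s crit_iff[of A1 q] by auto
    have c2: "A2 \<subseteq> Q" "q \<notin> A2" "q \<in> Q" "T (insert q A2) - {q} \<notin> CC"
      using assms(2) crit_iff[of A2 q] by auto
    have "A2 \<subseteq> T (insert q A1) - {q,s}" using assms(4) ns by auto
    hence "q \<in> T (insert q A1) - {q,s}" using valid[OF c2 c1] by blast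
    thus False by auto
  qed
qed

lemma inj_aux: assumes "(A1,q) \<in> crit" "(A2,q) \<in> crit" "A1 \<subseteq> B" "B \<subseteq> T (insert q A2) - {q}"
  "A2 \<subseteq> B" "B \<subseteq> T (insert q A1) - {q}" shows "A1 = A2"
proof -
  have q1: "insert q A1 \<subseteq> Q" and q2: "insert q A2 \<subseteq> Q" using assms(1,2) crit_iff[of A1 q] crit_iff[of A2 q] by auto
  have "insert q A1 \<subseteq> T (insert q A2)" using assms(3,4) tau_props(2)[OF q2] by auto
  hence t1: "T (insert q A1) \<subseteq> T (insert q A2)" using tau_props(1,3)[OF q1] tau_props(1)[OF q2] by blast
  have "insert q A2 \<subseteq> T (insert q A1)" using assms(5,6) tau_props(2)[OF q1] by auto
  hence "T (insert q A2) \<subseteq> T (insert q A1)" using tau_props(1,3)[OF q2] tau_props(1)[OF q1] by blast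
  hence eq: "T (insert q A1) = T (insert q A2)" using t1 by auto
  have "A1 \<subseteq> A2" using sub_aux[OF assms(1,2) eq] assms(5,6) by auto
  moreover have "A2 \<subseteq> A1" using sub_aux[OF assms(2,1) eq[symmetric]] assms(3,4) by auto
  ultimately show ?thesis by auto
qed

end

theorem corollary3p7:
  fixes Q :: "'a set" and R :: "'a rule set"
  assumes "finite Q"
    and "\<forall>r\<in>R. is_rule_on Q r"
  shows "AR Q (critical_rules Q (AR Q R)) = AR Q R
    \<and> card (critical_rules Q (AR Q R)) \<le> card R
    \<and> rules_size (critical_rules Q (AR Q R)) \<le> rules_size R"
proof -
  interpret ctx Q R using assms by unfold_locales
  have p1: "acc Q crit = AA" using acc_to_crit crit_to_acc by blast
  have "R \<subseteq> Pow Q \<times> Q" using assms(2) unfolding is_rule_on_def by fastforce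
  hence finR: "finite R" using assms(1) finite_subset by blast
  have "\<forall>r\<in>crit. \<exists>b. b \<in> R \<and> snd b = snd r \<and> fst r \<subseteq> fst b \<and>
      fst b \<subseteq> T (insert (snd r) (fst r)) - {snd r}"
  proof
    fix r assume r: "r \<in> crit"
    obtain A q where rr: "r = (A,q)" by fastforce
    show "\<exists>b. b \<in> R \<and> snd b = snd r \<and> fst r \<subseteq> fst b \<and>
      fst b \<subseteq> T (insert (snd r) (fst r)) - {snd r}"
      using exB[of A q] r rr by fastforce
  qed
  then obtain f where f: "\<forall>r\<in>crit. f r \<in> R \<and> snd (f r) = snd r \<and> fst r \<subseteq> fst (f r) \<and>
      fst (f r) \<subseteq> T (insert (snd r) (fst r)) - {snd r}" by metis
  have inj: "inj_on f crit"
  proof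
    fix r1 r2 assume r: "r1 \<in> crit" "r2 \<in> crit" "f r1 = f r2"
    obtain A1 q1 where r1: "r1 = (A1,q1)" by fastforce
    obtain A2 q2 where r2: "r2 = (A2,q2)" by fastforce
    have "q1 = q2" using f r r1 r2 by (metis snd_conv)
    hence c1: "(A1,q1) \<in> crit" and c2: "(A2,q1) \<in> crit" using r r1 r2 by auto
    have f1: "f r1 \<in> R \<and> snd (f r1) = snd r1 \<and> fst r1 \<subseteq> fst (f r1) \<and>
      fst (f r1) \<subseteq> T (insert (snd r1) (fst r1)) - {snd r1}" using f r(1) by blast
    have f2: "f r2 \<in> R \<and> snd (f r2) = snd r2 \<and> fst r2 \<subseteq> fst (f r2) \<and>
      fst (f r2) \<subseteq> T (insert (snd r2) (fst r2)) - {snd r2}" using f r(2) by blast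
    have h1: "A1 \<subseteq> fst (f r1)" "fst (f r1) \<subseteq> T (insert q1 A1) - {q1}"
      using f1 r1 by simp_all
    have h2: "A2 \<subseteq> fst (f r1)" "fst (f r1) \<subseteq> T (insert q1 A2) - {q1}"
      using f2 r(3) r2 \<open>q1 = q2\<close> by simp_all
    have "A1 = A2" by (rule inj_aux[OF c1 c2 h1(1) h2(2) h2(1) h1(2)])
    then show "r1 = r2" using r1 r2 \<open>q1 = q2\<close> by simp
  qed
  have sub: "f ` crit \<subseteq> R" using f by auto
  have c: "card crit \<le> card R" using card_inj_on_le[OF inj sub finR] .
  have "rules_size crit = (\<Sum>r\<in>crit. card (fst r) + 1)" by (simp add: rules_size_def)
  also have "\<dots> \<le> (\<Sum>r\<in>crit. card (fst (f r)) + 1)"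
  proof (rule sum_mono)
    fix r assume r: "r \<in> crit"
    have "fst (f r) \<subseteq> Q" using f r assms(2) unfolding is_rule_on_def by auto
    hence "finite (fst (f r))" using assms(1) finite_subset by blast
    thus "card (fst r) + 1 \<le> card (fst (f r)) + 1" using f r card_mono by fastforce
  qed
  also have "\<dots> = (\<Sum>b\<in>f ` crit. card (fst b) + 1)" by (rule sum.reindex[OF inj, symmetric, unfolded comp_def])
  also have "\<dots> \<le> (\<Sum>b\<in>R. card (fst b) + 1)" by (rule sum_mono2[OF finR sub]) auto
  finally have s: "rules_size crit \<le> rules_size R" by (simp add: rules_size_def)
  show ?thesis unfolding AR_acc using p1 c s by simp
qed

end
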